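(* Let $(R,\mathfrak{m})$ be a commutative Artinian local ring with identity, $\mathfrak{m}\neq0$ and $\mathfrak{m}^2=0$. If $|R|>4$ (including the case $R$ infinite), then $L(x^6)=\{2,3,4,6\}$; if $|R|=4$, then $L(x^6)=\{2,4,6\}$.
   Context: A nonunit polynomial in $R[x]$ is irreducible if in any factorization into two polynomials one factor is a unit of $R[x]$. A positive integer $k$ is a length of $f$ if $f$ is a product of $k$ irreducible polynomials of $R[x]$; $L(f)$ denotes the set of lengths of $f$. *)

theory Defs
  imports "HOL-Computational_Algebra.Polynomial" "HOL-Computational_Algebra.Factorial_Ring"
begin

definition is_ideal :: "'a::comm_ring_1 set \<Rightarrow> bool" where
  "is_ideal I \<longleftrightarrow> 0 \<in> I \<and> (\<forall>a\<in>I. \<forall>b\<in>I. a + b \<in> I) \<and> (\<forall>r. \<forall>a\<in>I. r * a \<in> I)"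

definition artinian_ring :: "'a::comm_ring_1 itself \<Rightarrow> bool" where
  "artinian_ring _ \<longleftrightarrow>
     (\<forall>f :: nat \<Rightarrow> 'a set. (\<forall>n. is_ideal (f n)) \<and> (\<forall>n. f (Suc n) \<subseteq> f n)
        \<longrightarrow> (\<exists>N. \<forall>n\<ge>N. f n = f N))"

(* The set of non-units; the ring is local iff this set is a proper ideal,
   in which case it is the unique maximal ideal. *)
definition nonunits :: "'a::comm_ring_1 set" where
  "nonunits = {a. \<not> a dvd 1}"

definition local_ring :: "'a::comm_ring_1 itself \<Rightarrow> bool" where
  "local_ring _ \<longleftrightarrow> (0::'a) \<noteq> 1 \<and> is_ideal (nonunits :: 'a set)"

definition lengths :: "'a::comm_ring_1 poly \<Rightarrow> nat set" where
  "lengths f = {k. k > 0 \<and> (\<exists>fs. length fs = k \<and> (\<forall>g\<in>set fs. irreducible g) \<and> prod_list fs = f)}"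

end

theory Submission
  imports Defs
begin


lemma ring_id: "(x + z) * (y - y*y*z) = x*y - (x*y)*y*z + y*z - y*y*(z*z)"
  for x y z :: "'b::comm_ring"
  by (simp add: algebra_simps)

locale mr =
  fixes N :: "'a::comm_ring_1 set"
  assumes N_eq: "N = {a. \<not> a dvd 1}"
    and addN: "a \<in> N \<Longrightarrow> b \<in> N \<Longrightarrow> a + b \<in> N"
    and mulN: "a \<in> N \<Longrightarrow> r * a \<in> N"
    and sq: "a \<in> N \<Longrightarrow> b \<in> N \<Longrightarrow> a * b = 0"
    and nz: "(0::'a) \<noteq> 1"
begin

lemma inN: "a \<in> N \<longleftrightarrow> \<not> a dvd 1" by (simp add: N_eq)
lemma zeroN: "0 \<in> N" using nz by (simp add: inN)
lemma oneN: "1 \<notin> N" by (simp add: inN)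
lemma mulN2: "a \<in> N \<Longrightarrow> a * r \<in> N" using mulN[of a r] by (simp add: mult.commute)
lemma negN: "a \<in> N \<Longrightarrow> - a \<in> N" using mulN[of a "-1"] by simp
lemma diffN: "a \<in> N \<Longrightarrow> b \<in> N \<Longrightarrow> a - b \<in> N" using addN[of a "-b"] negN by simp
lemma sumN: "finite A \<Longrightarrow> (\<forall>i\<in>A. f i \<in> N) \<Longrightarrow> sum f A \<in> N"
  by (induction A rule: finite_induct) (auto simp: zeroN addN)
lemma unit_add: "a \<notin> N \<Longrightarrow> b \<in> N \<Longrightarrow> a + b \<notin> N"
proof
  assume "a \<notin> N" "b \<in> N" "a + b \<in> N"
  then have "(a + b) - b \<in> N" using diffN by blast
  then show False using \<open>a \<notin> N\<close> by simp
qed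
lemma unit_mul: "a \<notin> N \<Longrightarrow> b \<notin> N \<Longrightarrow> a * b \<notin> N"
  using mult_dvd_mono[of a 1 b 1] by (simp add: inN)
lemma unit_cancel: "a \<notin> N \<Longrightarrow> a * b = 0 \<Longrightarrow> b = 0"
proof -
  assume "a \<notin> N" "a * b = 0"
  then obtain c where "1 = a * c" by (auto simp: inN elim!: dvdE)
  then have "b = (a * b) * c" by (metis mult.commute mult.left_commute mult_1_right)
  then show "b = 0" using \<open>a * b = 0\<close> by simp
qed

definition ml :: "'a poly \<Rightarrow> nat \<Rightarrow> bool" where
  "ml f d \<longleftrightarrow> coeff f d \<notin> N \<and> (\<forall>n. n \<noteq> d \<longrightarrow> coeff f n \<in> N)"

lemma key:
  assumes "coeff f a \<notin> N" "coeff g b \<notin> N"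
    and "\<And>i. i \<le> a + b \<Longrightarrow> i \<noteq> a \<Longrightarrow> coeff f i * coeff g (a + b - i) \<in> N"
  shows "coeff (f * g) (a + b) \<notin> N"
proof -
  have "coeff (f * g) (a + b) = coeff f a * coeff g (a + b - a) +
     (\<Sum>i\<in>{..a+b} - {a}. coeff f i * coeff g (a + b - i))"
    unfolding coeff_mult by (rule sum.remove) auto
  moreover have "(\<Sum>i\<in>{..a+b} - {a}. coeff f i * coeff g (a + b - i)) \<in> N"
    by (rule sumN) (auto intro: assms(3))
  moreover have "coeff f a * coeff g (a + b - a) \<notin> N" using assms unit_mul by simp
  ultimately show ?thesis using unit_add by simp
qed

lemma allN:
  assumes "\<And>i. i \<le> n \<Longrightarrow> coeff f i * coeff g (n - i) \<in> N"
  shows "coeff (f * g) n \<in> N"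
  unfolding coeff_mult by (rule sumN) (auto intro: assms)

lemma ml_mult: "ml f d \<Longrightarrow> ml g e \<Longrightarrow> ml (f * g) (d + e)"
  unfolding ml_def
proof (intro conjI allI impI)
  assume a: "coeff f d \<notin> N \<and> (\<forall>n. n \<noteq> d \<longrightarrow> coeff f n \<in> N)"
    "coeff g e \<notin> N \<and> (\<forall>n. n \<noteq> e \<longrightarrow> coeff g n \<in> N)"
  show "coeff (f * g) (d + e) \<notin> N"
    by (rule key) (use a mulN2 in auto)
  fix n assume "n \<noteq> d + e"
  show "coeff (f * g) n \<in> N"
  proof (rule allN)
    fix i assume "i \<le> n"
    show "coeff f i * coeff g (n - i) \<in> N"
    proof (cases "i = d")
      case True
      then have "n - i \<noteq> e" using \<open>n \<noteq> d + e\<close> \<open>i \<le> n\<close> by auto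
      then show ?thesis using a mulN by auto
    next
      case False
      then show ?thesis using a mulN2 by auto
    qed
  qed
qed

lemma ml_unique: "ml f d \<Longrightarrow> ml f e \<Longrightarrow> d = e"
  unfolding ml_def by blast

lemma ml_factor:
  assumes fg: "f * g = p" and mp: "ml p D"
  shows "\<exists>d e. ml f d \<and> ml g e \<and> d + e = D"
proof -
  have exf: "\<exists>i. coeff f i \<notin> N"
  proof (rule ccontr)
    assume "\<not> ?thesis"
    then have "coeff (f * g) D \<in> N" by (intro allN) (auto intro: mulN2)
    then show False using mp fg by (auto simp: ml_def)
  qed
  have exg: "\<exists>i. coeff g i \<notin> N"
  proof (rule ccontr)
    assume "\<not> ?thesis"
    then have "coeff (f * g) D \<in> N" by (intro allN) (auto intro: mulN)
    then show False using mp fg by (auto simp: ml_def)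
  qed
  have bf: "\<And>i. coeff f i \<notin> N \<Longrightarrow> i \<le> degree f"
    using zeroN by (metis coeff_eq_0 not_le)
  have bg: "\<And>i. coeff g i \<notin> N \<Longrightarrow> i \<le> degree g"
    using zeroN by (metis coeff_eq_0 not_le)
  define i0 where "i0 = (LEAST i. coeff f i \<notin> N)"
  define j0 where "j0 = (LEAST i. coeff g i \<notin> N)"
  define I0 where "I0 = (GREATEST i. coeff f i \<notin> N)"
  define J0 where "J0 = (GREATEST i. coeff g i \<notin> N)"
  have i0: "coeff f i0 \<notin> N" "\<And>i. i < i0 \<Longrightarrow> coeff f i \<in> N"
    unfolding i0_def by (rule LeastI_ex[OF exf]) (use not_less_Least in blast)
  have j0: "coeff g j0 \<notin> N" "\<And>i. i < j0 \<Longrightarrow> coeff g i \<in> N"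
    unfolding j0_def by (rule LeastI_ex[OF exg]) (use not_less_Least in blast)
  obtain f1 where f1: "coeff f f1 \<notin> N" using exf by blast
  have I0: "coeff f I0 \<notin> N" "\<And>i. I0 < i \<Longrightarrow> coeff f i \<in> N"
  proof -
    show "coeff f I0 \<notin> N" unfolding I0_def
      by (rule GreatestI_nat[where k = f1 and b = "degree f"]) (use f1 bf in auto)
    fix i assume "I0 < i"
    show "coeff f i \<in> N"
    proof (rule ccontr)
      assume "coeff f i \<notin> N"
      then have "i \<le> I0" unfolding I0_def
        by (rule Greatest_le_nat[where b = "degree f"]) (use bf in auto)
      then show False using \<open>I0 < i\<close> by simp
    qed
  qed
  obtain g1 where g1: "coeff g g1 \<notin> N" using exg by blast
  have J0: "coeff g J0 \<notin> N" "\<And>i. J0 < i \<Longrightarrow> coeff g i \<in> N"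
  proof -
    show "coeff g J0 \<notin> N" unfolding J0_def
      by (rule GreatestI_nat[where k = g1 and b = "degree g"]) (use g1 bg in auto)
    fix i assume "J0 < i"
    show "coeff g i \<in> N"
    proof (rule ccontr)
      assume "coeff g i \<notin> N"
      then have "i \<le> J0" unfolding J0_def
        by (rule Greatest_le_nat[where b = "degree g"]) (use bg in auto)
      then show False using \<open>J0 < i\<close> by simp
    qed
  qed
  have "coeff (f * g) (i0 + j0) \<notin> N"
  proof (rule key[OF i0(1) j0(1)])
    fix i assume "i \<le> i0 + j0" "i \<noteq> i0"
    then show "coeff f i * coeff g (i0 + j0 - i) \<in> N"
      using i0(2) j0(2) mulN mulN2 by (cases "i < i0") auto
  qed
  then have 1: "i0 + j0 = D" using mp fg unfolding ml_def by auto
  have "coeff (f * g) (I0 + J0) \<notin> N"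
  proof (rule key[OF I0(1) J0(1)])
    fix i assume "i \<le> I0 + J0" "i \<noteq> I0"
    then show "coeff f i * coeff g (I0 + J0 - i) \<in> N"
      using I0(2) J0(2) mulN mulN2 by (cases "i < I0") auto
  qed
  then have 2: "I0 + J0 = D" using mp fg unfolding ml_def by auto
  have "i0 \<le> I0" using I0(1) i0(2) by (meson not_le)
  moreover have "j0 \<le> J0" using J0(1) j0(2) by (meson not_le)
  ultimately have e1: "i0 = I0" and e2: "j0 = J0" using 1 2 by auto
  have "ml f i0" unfolding ml_def using i0 I0 e1 by (metis linorder_neqE_nat)
  moreover have "ml g j0" unfolding ml_def using j0 J0 e2 by (metis linorder_neqE_nat)
  ultimately show ?thesis using 1 by blast
qed


definition mdeg :: "'a poly \<Rightarrow> nat" where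
  "mdeg f = (LEAST d. coeff f d \<notin> N)"

lemma mdeg_eq: "ml f d \<Longrightarrow> mdeg f = d"
  unfolding mdeg_def ml_def by (rule Least_equality) auto

lemma ml_one: "ml 1 0"
  unfolding ml_def using oneN zeroN by (auto simp: coeff_1)

lemma ml_one_iff: "ml 1 d \<longleftrightarrow> d = 0"
  using ml_one ml_unique by blast

lemma list_ml:
  "ml (prod_list fs) D \<Longrightarrow> (\<forall>f\<in>set fs. ml f (mdeg f)) \<and> sum_list (map mdeg fs) = D"
proof (induction fs arbitrary: D)
  case Nil
  then show ?case using ml_one_iff by simp
next
  case (Cons f fs)
  then obtain d e where "ml f d" "ml (prod_list fs) e" "d + e = D"
    using ml_factor[of f "prod_list fs" "prod_list (f # fs)" D] by auto
  then show ?case using Cons.IH[of e] mdeg_eq by auto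
qed

lemma ml_prod_list:
  "(\<forall>f\<in>set fs. ml f (mdeg f)) \<Longrightarrow> ml (prod_list fs) (sum_list (map mdeg fs))"
  by (induction fs) (auto simp: ml_one intro: ml_mult)

lemma unit_ml0: "f dvd 1 \<Longrightarrow> ml f 0"
proof -
  assume "f dvd 1"
  then obtain g where "1 = f * g" by (elim dvdE)
  then show ?thesis using ml_factor[of f g 1 0] ml_one by auto
qed

lemma ml0_unit: assumes "ml f 0" shows "f dvd 1"
proof -
  define c where "c = coeff f 0"
  have "c \<notin> N" using assms by (simp add: ml_def c_def)
  then obtain c' where cc: "1 = c * c'" by (auto simp: inN elim!: dvdE)
  define g where "g = f - [:c:]"
  have gN: "\<And>n. coeff g n \<in> N"
    using assms zeroN unfolding g_def c_def ml_def by (case_tac n) auto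
  have gg: "g * g = 0"
  proof (rule poly_eqI)
    fix n show "coeff (g * g) n = coeff 0 n"
      unfolding coeff_mult using sq[OF gN gN] by simp
  qed
  have f: "f = [:c:] + g" by (simp add: g_def)
  have one: "[:c:] * [:c':] = 1" using cc by (simp add: one_pCons mult.commute)
  have "f * ([:c':] - [:c':] * [:c':] * g) =
     [:c:] * [:c':] - ([:c:] * [:c':]) * [:c':] * g + [:c':] * g - [:c':] * [:c':] * (g * g)"
    unfolding f by (rule ring_id)
  also have "\<dots> = 1" unfolding one gg by simp
  finally have "1 = f * ([:c':] - [:c':] * [:c':] * g)" by simp
  then show ?thesis by (rule dvdI)
qed


lemma irr_deg: "irreducible f \<Longrightarrow> ml f d \<Longrightarrow> 1 \<le> d"
proof (rule ccontr)
  assume "irreducible f" "ml f d" "\<not> 1 \<le> d"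
  then have "d = 0" by simp
  then have "ml f 0" using \<open>ml f d\<close> by simp
  then have "f dvd 1" by (rule ml0_unit)
  then show False using \<open>irreducible f\<close> irreducible_not_unit by blast
qed

lemma X_ml: "ml [:0, 1:] 1"
  unfolding ml_def using oneN zeroN by (auto simp: coeff_pCons split: nat.splits)

lemma irr_coeff0:
  assumes "irreducible f" "ml f d" "2 \<le> d" shows "coeff f 0 \<noteq> 0"
proof
  assume c0: "coeff f 0 = 0"
  obtain a q where fq: "f = pCons a q" by (cases f)
  then have a: "a = 0" using c0 by simp
  then have "f = [:0, 1:] * q" using fq by simp
  then have "([:0, 1:] :: 'a poly) dvd 1 \<or> q dvd 1" by (rule irreducibleD[OF assms(1)])
  moreover have "\<not> [:0, 1:] dvd (1 :: 'a poly)"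
  proof
    assume "[:0, 1:] dvd (1 :: 'a poly)"
    then have "ml [:0, 1:] 0" by (rule unit_ml0)
    from ml_unique[OF X_ml this] show False by simp
  qed
  moreover have mq: "ml q (d - 1)"
    using assms(2,3) unfolding fq ml_def
    by (auto simp: coeff_pCons split: nat.splits)
  moreover have "\<not> q dvd 1"
  proof
    assume "q dvd 1"
    then have "ml q 0" by (rule unit_ml0)
    from ml_unique[OF mq this] assms(3) show False by simp
  qed
  ultimately show False by blast
qed

lemma irr_intro:
  assumes "ml f d" "1 \<le> d" "d = 1 \<or> coeff f 0 \<noteq> 0"
  shows "irreducible f"
proof (rule irreducibleI)
  show "f \<noteq> 0" using assms(1) zeroN by (auto simp: ml_def)
  show "\<not> f dvd 1"
  proof
    assume "f dvd 1"
    then have "ml f 0" by (rule unit_ml0)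
    from ml_unique[OF assms(1) this] assms(2) show False by simp
  qed
  fix a b assume ab: "f = a * b"
  show "a dvd 1 \<or> b dvd 1"
  proof (rule ccontr)
    assume nu: "\<not> (a dvd 1 \<or> b dvd 1)"
    obtain i j where ij: "ml a i" "ml b j" "i + j = d"
      using ml_factor[of a b f d] ab assms(1) by auto
    have "i \<noteq> 0"
    proof
      assume "i = 0"
      with ij have "ml a 0" by simp
      then have "a dvd 1" by (rule ml0_unit)
      with nu show False by simp
    qed
    have "j \<noteq> 0"
    proof
      assume "j = 0"
      with ij have "ml b 0" by simp
      then have "b dvd 1" by (rule ml0_unit)
      with nu show False by simp
    qed
    then have "coeff f 0 \<noteq> 0" using assms(3) ij \<open>i \<noteq> 0\<close> by auto
    moreover have "coeff f 0 = 0"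
      using ab ij \<open>i \<noteq> 0\<close> \<open>j \<noteq> 0\<close> sq by (simp add: coeff_mult_0 ml_def)
    ultimately show False by simp
  qed
qed


lemma low_zero:
  "(\<forall>g\<in>set gs. ml g (mdeg g) \<and> mdeg g \<le> M) \<Longrightarrow> n + M < sum_list (map mdeg gs)
   \<Longrightarrow> coeff (prod_list gs) n = 0"
proof (induction gs arbitrary: n)
  case Nil
  then show ?case by simp
next
  case (Cons g gs)
  define S' where "S' = sum_list (map mdeg gs)"
  define d where "d = mdeg g"
  have mg: "ml g d" "d \<le> M" using Cons.prems(1) by (auto simp: d_def)
  have mP: "ml (prod_list gs) S'" unfolding S'_def
    using Cons.prems(1) by (intro ml_prod_list) auto
  have lt: "n + M < d + S'" using Cons.prems(2) by (simp add: d_def S'_def)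
  have "coeff (g * prod_list gs) n = 0"
    unfolding coeff_mult
  proof (rule sum.neutral, intro ballI)
    fix i assume "i \<in> {..n}"
    then have i: "i \<le> n" by simp
    show "coeff g i * coeff (prod_list gs) (n - i) = 0"
    proof (cases "n - i + M < S'")
      case True
      then show ?thesis using Cons.IH[of "n - i"] Cons.prems(1) by (simp add: S'_def)
    next
      case False
      then have "i \<noteq> d" using lt i by auto
      then have "coeff g i \<in> N" using mg by (simp add: ml_def)
      moreover have "n - i \<noteq> S'" using lt mg(2) i by auto
      then have "coeff (prod_list gs) (n - i) \<in> N" using mP by (simp add: ml_def)
      ultimately show ?thesis using sq by blast
    qed
  qed
  then show ?case by simp
qed

lemma prod_list_remove1: "x \<in> set xs \<Longrightarrow> prod_list xs = x * prod_list (remove1 x xs)"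
  for xs :: "'b::comm_monoid_mult list"
  by (induction xs) (auto simp: ac_simps)

lemma X6: "coeff ([:0, 1:] ^ 6 :: 'a poly) n = (if n = 6 then 1 else 0)"
proof -
  have "([:0, 1:] ^ 6 :: 'a poly) = monom 1 6" by (simp add: monom_altdef)
  then show ?thesis by (simp add: coeff_monom)
qed

lemma X6_ml: "ml ([:0, 1:] ^ 6) 6"
  unfolding ml_def X6 using oneN zeroN by auto

lemma umax:
  assumes fs: "prod_list fs = [:0, 1:] ^ 6" and all: "\<forall>g\<in>set fs. ml g (mdeg g)"
    and f: "f \<in> set fs" and M: "\<forall>g\<in>set (remove1 f fs). mdeg g \<le> M"
    and MD: "M < mdeg f" and c0: "coeff f 0 \<noteq> 0"
  shows False
proof -
  define rs where "rs = remove1 f fs"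
  define P where "P = prod_list rs"
  define S where "S = sum_list (map mdeg rs)"
  define D where "D = mdeg f"
  have sum6: "sum_list (map mdeg fs) = 6" using list_ml[of fs 6] fs X6_ml by simp
  have DS: "D + S = 6" using sum_list_map_remove1[OF f, of mdeg] sum6 by (simp add: D_def S_def rs_def)
  have prod: "f * P = [:0, 1:] ^ 6" using prod_list_remove1[OF f] fs by (simp add: P_def rs_def)
  have allr: "\<forall>g\<in>set rs. ml g (mdeg g)" using all set_remove1_subset[of f fs] by (auto simp: rs_def)
  have mP: "ml P S" unfolding P_def S_def using allr by (rule ml_prod_list)
  have mf: "ml f D" using all f by (simp add: D_def)
  have "coeff (f * P) S = coeff f 0 * coeff P S + (\<Sum>i\<in>{..S} - {0}. coeff f i * coeff P (S - i))"
    unfolding coeff_mult by (subst sum.remove[of _ 0]) auto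
  also have "(\<Sum>i\<in>{..S} - {0}. coeff f i * coeff P (S - i)) = 0"
  proof (rule sum.neutral, intro ballI)
    fix i assume i: "i \<in> {..S} - {0}"
    show "coeff f i * coeff P (S - i) = 0"
    proof (cases "i = D")
      case True
      have "coeff P (S - i) = 0" unfolding P_def
        using low_zero[of rs M "S - i"] allr M MD i True by (auto simp: rs_def S_def D_def)
      then show ?thesis by simp
    next
      case False
      then have "coeff f i \<in> N" using mf by (simp add: ml_def)
      moreover have "coeff P (S - i) \<in> N" using mP i by (auto simp: ml_def)
      ultimately show ?thesis using sq by blast
    qed
  qed
  finally have "coeff (f * P) S = coeff f 0 * coeff P S" by simp
  moreover have "coeff f 0 \<in> N" using mf MD by (auto simp: ml_def D_def)
  moreover have "coeff P S \<notin> N" using mP by (simp add: ml_def)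
  ultimately have "coeff (f * P) S \<noteq> 0" using c0 unit_cancel by (metis mult.commute)
  moreover have "S \<noteq> 6" using DS MD by (simp add: D_def)
  ultimately show False using prod X6 by simp
qed

lemma len_le_sum: "(\<forall>x\<in>set xs. 1 \<le> h x) \<Longrightarrow> length xs \<le> sum_list (map h xs)"
  for h :: "'b \<Rightarrow> nat"
  by (induction xs) auto

lemma sum_le_len: "(\<forall>x\<in>set xs. h x \<le> 1) \<Longrightarrow> sum_list (map h xs) \<le> length xs"
  for h :: "'b \<Rightarrow> nat"
  by (induction xs) auto

lemma other_bound:
  "(\<forall>x\<in>set xs. 1 \<le> h x) \<Longrightarrow> y \<in> set xs \<Longrightarrow> h y + (length xs - 1) \<le> sum_list (map h xs)"
  for h :: "'b \<Rightarrow> nat"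
  using sum_list_map_remove1[of y xs h] len_le_sum[of "remove1 y xs" h] set_remove1_subset[of y xs]
  by (auto simp: length_remove1)


lemma sub_setup:
  assumes fs: "prod_list fs = [:0, 1:] ^ 6" and irr: "\<forall>g\<in>set fs. irreducible g"
  shows "\<forall>g\<in>set fs. ml g (mdeg g)" "sum_list (map mdeg fs) = 6" "\<forall>g\<in>set fs. 1 \<le> mdeg g"
    "length fs \<le> 6"
proof -
  show a: "\<forall>g\<in>set fs. ml g (mdeg g)" "sum_list (map mdeg fs) = 6"
    using list_ml[of fs 6] fs X6_ml by auto
  show b: "\<forall>g\<in>set fs. 1 \<le> mdeg g" using a(1) irr irr_deg by blast
  show "length fs \<le> 6" using len_le_sum[OF b] a(2) by simp
qed

lemma no_big:
  assumes fs: "prod_list fs = [:0, 1:] ^ 6" and irr: "\<forall>g\<in>set fs. irreducible g"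
    and k: "3 \<le> length fs" and g: "g \<in> set fs"
  shows "mdeg g \<le> 2"
proof (rule ccontr)
  assume "\<not> ?thesis"
  then have g3: "3 \<le> mdeg g" by simp
  note st = sub_setup[OF fs irr]
  have s: "mdeg g + sum_list (map mdeg (remove1 g fs)) = 6"
    using sum_list_map_remove1[OF g, of mdeg] st(2) by simp
  have "\<forall>h\<in>set (remove1 g fs). mdeg h \<le> 5 - mdeg g"
  proof
    fix h assume h: "h \<in> set (remove1 g fs)"
    have "mdeg h + (length (remove1 g fs) - 1) \<le> sum_list (map mdeg (remove1 g fs))"
      using other_bound[OF _ h, of mdeg] st(3) set_remove1_subset[of g fs] by blast
    then show "mdeg h \<le> 5 - mdeg g" using s k g by (simp add: length_remove1)
  qed
  moreover have "coeff g 0 \<noteq> 0" using irr_coeff0[of g "mdeg g"] irr st(1) g g3 by auto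
  moreover have "5 - mdeg g < mdeg g" using g3 by arith
  ultimately show False using umax[OF fs st(1) g, of "5 - mdeg g"] by blast
qed

lemma sub_len:
  fixes fs :: "'a poly list"
  assumes fs: "prod_list fs = [:0, 1:] ^ 6" and irr: "\<forall>g\<in>set fs. irreducible g"
    and k: "0 < length fs"
  shows "length fs \<in> {2, 3, 4, 6}"
proof -
  note st = sub_setup[OF fs irr]
  have "length fs \<noteq> 1"
  proof
    assume "length fs = 1"
    then obtain g where g: "fs = [g]" by (cases fs) auto
    then have "mdeg g = 6" using st(2) by simp
    moreover have "coeff g 0 \<noteq> 0" using irr_coeff0[of g 6] irr st(1) g \<open>mdeg g = 6\<close> by auto
    ultimately show False using umax[OF fs st(1), of g 0] g by simp
  qed
  moreover have "length fs \<noteq> 5"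
  proof
    assume k5: "length fs = 5"
    obtain g where g: "g \<in> set fs" "2 \<le> mdeg g"
    proof (rule ccontr)
      assume "\<not> thesis"
      then have "\<forall>x\<in>set fs. mdeg x \<le> 1" using that by force
      then show False using sum_le_len[of fs mdeg] st(2) k5 by simp
    qed
    have g2: "mdeg g = 2" using no_big[OF fs irr _ g(1)] k5 g(2) by simp
    have s: "mdeg g + sum_list (map mdeg (remove1 g fs)) = 6"
      using sum_list_map_remove1[OF g(1), of mdeg] st(2) by simp
    have "\<forall>h\<in>set (remove1 g fs). mdeg h \<le> 1"
    proof
      fix h assume h: "h \<in> set (remove1 g fs)"
      have "mdeg h + (length (remove1 g fs) - 1) \<le> sum_list (map mdeg (remove1 g fs))"
        using other_bound[OF _ h, of mdeg] st(3) set_remove1_subset[of g fs] by blast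
      then show "mdeg h \<le> 1" using s k5 g g2 by (simp add: length_remove1)
    qed
    moreover have "coeff g 0 \<noteq> 0" using irr_coeff0[of g "mdeg g"] irr st(1) g g2 by auto
    ultimately show False using umax[OF fs st(1) g(1), of 1] g2 by simp
  qed
  moreover note st(4) k
  ultimately show ?thesis by (simp only: insert_iff empty_iff) presburger
qed

lemma sub3:
  assumes fs: "prod_list fs = [:0, 1:] ^ 6" and irr: "\<forall>g\<in>set fs. irreducible g"
    and k: "length fs = 3"
  shows "\<exists>f g h. fs = [f, g, h] \<and> ml f 2 \<and> ml g 2 \<and> ml h 2 \<and>
     coeff f 0 \<noteq> 0 \<and> coeff g 0 \<noteq> 0 \<and> coeff h 0 \<noteq> 0"
proof -
  note st = sub_setup[OF fs irr]
  obtain f g h where fgh: "fs = [f, g, h]" using k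
    by (cases fs; cases "tl fs"; cases "tl (tl fs)") auto
  have le: "mdeg f \<le> 2" "mdeg g \<le> 2" "mdeg h \<le> 2"
    using no_big[OF fs irr] k fgh by auto
  have eq: "mdeg f = 2" "mdeg g = 2" "mdeg h = 2" using st(2) le fgh by auto
  show ?thesis using fgh eq st(1) irr irr_coeff0 by fastforce
qed


lemma c4_contra:
  assumes e: "e \<in> N" "e \<noteq> 0" and Ne: "\<forall>a\<in>N. a \<noteq> 0 \<longrightarrow> a = e"
    and ue: "\<forall>u. u \<notin> N \<longrightarrow> e * u = e" and ee: "e + e = 0"
    and m: "ml f 2" "ml g 2" "ml h 2"
    and c: "coeff f 0 \<noteq> 0" "coeff g 0 \<noteq> 0" "coeff h 0 \<noteq> 0"
  shows "coeff (f * (g * h)) 4 \<noteq> 0"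
proof -
  have N: "\<And>p n. ml p 2 \<Longrightarrow> n \<noteq> 2 \<Longrightarrow> coeff p n \<in> N" by (simp add: ml_def)
  have U: "\<And>p. ml p 2 \<Longrightarrow> coeff p 2 \<notin> N" by (simp add: ml_def)
  have z: "coeff f 0 = e" "coeff g 0 = e" "coeff h 0 = e" using Ne c N[OF m(1)] N[OF m(2)] N[OF m(3)] by auto
  have s2: "{..2::nat} = {0,1,2}" by auto
  have s1: "{..1::nat} = {0,1}" by auto
  have s4: "{..4::nat} = {0,1,2,3,4}" by auto
  have gh0: "coeff (g * h) 0 = 0" by (simp add: coeff_mult_0 z sq e)
  have gh1: "coeff (g * h) 1 = 0" unfolding coeff_mult s1
    using sq[OF N[OF m(2)] N[OF m(3)], of 0 1] sq[OF N[OF m(2)] N[OF m(3)], of 1 0] by simp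
  have "coeff (g * h) 2 = coeff g 0 * coeff h 2 + coeff g 1 * coeff h 1 + coeff g 2 * coeff h 0"
    unfolding coeff_mult s2 by (simp add: add.assoc)
  also have "\<dots> = e * coeff h 2 + 0 + e * coeff g 2"
    using sq[OF N[OF m(2)] N[OF m(3)], of 1 1] z by (simp add: mult.commute)
  also have "\<dots> = e + e" using ue U[OF m(3)] U[OF m(2)] by simp
  finally have gh2: "coeff (g * h) 2 = 0" using ee by simp
  have mgh: "ml (g * h) 4" using ml_mult[OF m(2,3)] by simp
  have gh3: "coeff (g * h) 3 \<in> N" and gh4: "coeff (g * h) 4 \<notin> N" using mgh by (auto simp: ml_def)
  have "coeff (f * (g * h)) 4 = coeff f 0 * coeff (g * h) 4 + coeff f 1 * coeff (g * h) 3"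
    by (subst coeff_mult) (simp add: s4 gh0 gh1 gh1[unfolded One_nat_def] gh2)
  also have "\<dots> = e" using sq[OF N[OF m(1)] gh3, of 1] ue gh4 z by simp
  finally show ?thesis using e by simp
qed

lemma Xd: "coeff ([:0, 1:] ^ d :: 'a poly) n = (if n = d then 1 else 0)"
proof -
  have "([:0, 1:] ^ d :: 'a poly) = monom 1 d" by (simp add: monom_altdef)
  then show ?thesis by (simp add: coeff_monom)
qed

lemma irrXa: assumes "a \<in> N" "a \<noteq> 0" "1 \<le> d" shows "irreducible ([:0, 1:] ^ d + [:a:])"
proof (rule irr_intro)
  show "ml ([:0, 1:] ^ d + [:a:]) d"
    unfolding ml_def using assms oneN zeroN by (auto simp: Xd coeff_pCons split: nat.splits)
  show "d = 1 \<or> coeff ([:0, 1:] ^ d + [:a:]) 0 \<noteq> 0" using assms by (simp add: Xd)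
qed (use assms in auto)

lemma irrX: "irreducible ([:0, 1:] :: 'a poly)"
  by (rule irr_intro[OF X_ml]) auto

end

lemma id2: "(X^3 + A) * (X^3 + B) = X^6" if "A + B = 0" "A * B = 0" for X A B :: "'b::comm_ring_1"
proof -
  have "(X^3 + A) * (X^3 + B) = X^6 + X^3 * (A + B) + A * B" by (simp add: algebra_simps flip: power_add)
  then show ?thesis using that by simp
qed

lemma id4: "(X^2 + A) * (X^2 + B) * X * X = X^6" if "A + B = 0" "A * B = 0" for X A B :: "'b::comm_ring_1"
proof -
  have "(X^2 + A) * (X^2 + B) * X * X = X^6 + X^4 * (A + B) + A * B * X * X"
    by (simp add: algebra_simps power2_eq_square power4_eq_xxxx eval_nat_numeral)
  then show ?thesis using that by simp
qed

lemma id3: "(X^2 + A) * (X^2 + B) * (X^2 + C) = X^6"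
  if "A + B + C = 0" "A * B = 0" "A * C = 0" "B * C = 0" for X A B C :: "'b::comm_ring_1"
proof -
  have "(X^2 + A) * (X^2 + B) * (X^2 + C) = X^6 + X^4 * (A + B + C) + X^2 * (A*B + A*C + B*C) + A * B * C"
    by (simp add: algebra_simps eval_nat_numeral)
  then show ?thesis using that by simp
qed


theorem lemma4p10:
  assumes "local_ring TYPE('a::comm_ring_1)"
    and "artinian_ring TYPE('a)"
    and "nonunits \<noteq> {0::'a}"
    and "\<forall>a\<in>(nonunits::'a set). \<forall>b\<in>nonunits. a * b = 0"
  shows "((infinite (UNIV::'a set) \<or> card (UNIV::'a set) > 4) \<longrightarrow>
           lengths ([:0, 1:] ^ 6 :: 'a poly) = {2, 3, 4, 6}) \<and>
         ((finite (UNIV::'a set) \<and> card (UNIV::'a set) = 4) \<longrightarrow>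
           lengths ([:0, 1:] ^ 6 :: 'a poly) = {2, 4, 6})"
proof -
  have id: "is_ideal (nonunits :: 'a set)" and nz: "(0::'a) \<noteq> 1"
    using assms(1) by (auto simp: local_ring_def)
  interpret mr "nonunits :: 'a set"
    by unfold_locales (use id nz assms(4) in \<open>auto simp: nonunits_def is_ideal_def\<close>)
  let ?X = "[:0, 1:] :: 'a poly"
  obtain e :: 'a where e: "e \<in> nonunits" "e \<noteq> 0"
    using assms(3) zeroN by blast
  have mem: "k \<in> lengths (?X ^ 6)" if "0 < k" "length fs = k" "\<forall>g\<in>set fs. irreducible g"
    "prod_list fs = ?X ^ 6" for k fs
    using that unfolding lengths_def by blast
  have L2: "2 \<in> lengths (?X ^ 6)"
    by (rule mem[of _ "[?X^3 + [:e:], ?X^3 + [:-e:]]"])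
       (use e irrXa[of e 3] irrXa[of "-e" 3] negN sq in \<open>auto intro: id2\<close>)
  have L4: "4 \<in> lengths (?X ^ 6)"
  proof (rule mem[of _ "[?X^2 + [:e:], ?X^2 + [:-e:], ?X, ?X]"])
    show "prod_list [?X^2 + [:e:], ?X^2 + [:-e:], ?X, ?X] = ?X ^ 6"
      using id4[of "[:e:]" "[:-e:]" ?X] sq[OF e(1) negN[OF e(1)]] by (simp add: mult.assoc)
  qed (use e irrXa[of e 2] irrXa[of "-e" 2] negN irrX in auto)
  have L6: "6 \<in> lengths (?X ^ 6)"
    by (rule mem[of _ "replicate 6 ?X"]) (use irrX in auto)
  have sub: "lengths (?X ^ 6) \<subseteq> {2, 3, 4, 6}"
    unfolding lengths_def using sub_len by blast
  have A: "lengths (?X ^ 6) = {2, 3, 4, 6}" if big: "infinite (UNIV::'a set) \<or> card (UNIV::'a set) > 4"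
  proof -
    obtain b where b: "b \<in> nonunits" "b \<noteq> 0" "e + b \<noteq> 0"
    proof (rule ccontr)
      assume "\<not> thesis"
      then have H: "\<forall>b\<in>nonunits. b \<noteq> 0 \<longrightarrow> e + b = 0" using that by blast
      then have ee: "e + e = 0" using e by blast
      then have me: "-e = e" by (metis add_eq_0_iff)
      have "UNIV \<subseteq> set [0, e, 1, 1 + e]"
      proof
        fix x :: 'a
        show "x \<in> set [0, e, 1, 1 + e]"
        proof (cases "x \<in> nonunits")
          case True
          then show ?thesis using H me by (metis add_eq_0_iff list.set_intros)
        next
          case False
          have "x * e \<in> nonunits" using mulN e by blast
          moreover have "x * e \<noteq> 0" using unit_cancel[OF False] e by blast
          ultimately have "x * e = e" using H me by (metis add_eq_0_iff)
          then have "(x - 1) * e = 0" by (simp add: algebra_simps)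
          then have "x - 1 \<in> nonunits" using unit_cancel e by blast
          then have "x - 1 = 0 \<or> e + (x - 1) = 0" using H by blast
          then have "x = 1 \<or> x = 1 + e" using me by (metis add.commute add_eq_0_iff diff_add_cancel right_minus_eq)
          then show ?thesis by auto
        qed
      qed
      then have "finite (UNIV :: 'a set)" "card (UNIV :: 'a set) \<le> 4"
        using finite_subset card_mono[of "set [0, e, 1, 1 + e]" UNIV] card_length[of "[0, e, 1, 1 + e]"]
        by (auto intro: finite_subset)
      then show False using big by simp
    qed
    define c where "c = - (e + b)"
    have c1: "c \<in> nonunits" unfolding c_def by (rule negN[OF addN[OF e(1) b(1)]])
    have c2: "c \<noteq> 0" unfolding c_def using b(3) by (metis neg_equal_0_iff_equal)
    note c = c1 c2
    have "3 \<in> lengths (?X ^ 6)"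
    proof (rule mem[of _ "[?X^2 + [:e:], ?X^2 + [:b:], ?X^2 + [:c:]]"])
      have s: "[:e:] + [:b:] + [:c:] = 0" by (simp add: c_def)
      have p1: "[:e:] * [:b:] = 0" by (simp add: sq[OF e(1) b(1)] sq[OF b(1) e(1)])
      have p2: "[:e:] * [:c:] = 0" by (simp add: sq[OF e(1) c(1)] sq[OF c(1) e(1)])
      have p3: "[:b:] * [:c:] = 0" by (simp add: sq[OF b(1) c(1)] sq[OF c(1) b(1)])
      have P: "(?X^2 + [:e:]) * (?X^2 + [:b:]) * (?X^2 + [:c:]) = ?X ^ 6"
        by (rule id3[OF s p1 p2 p3])
      show "prod_list [?X^2 + [:e:], ?X^2 + [:b:], ?X^2 + [:c:]] = ?X ^ 6"
        using P by (simp only: prod_list.Cons prod_list.Nil mult_1_right mult.assoc)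
    qed (use e b c irrXa[of e 2] irrXa[of b 2] irrXa[of c 2] in auto)
    then show ?thesis using L2 L4 L6 sub by auto
  qed
  have B: "lengths (?X ^ 6) = {2, 4, 6}" if four: "finite (UNIV::'a set)" "card (UNIV::'a set) = 4"
  proof -
    have 1: "1 + e \<notin> nonunits" using unit_add[OF oneN e(1)] .
    have d: "0 \<noteq> e" "0 \<noteq> (1::'a)" "0 \<noteq> 1 + e" "e \<noteq> 1" "e \<noteq> 1 + e" "1 \<noteq> 1 + e"
      using e nz 1 oneN zeroN by (metis, metis, metis, metis, metis, simp)
    have "card {0, e, 1, 1 + e} = 4" using d by simp
    then have S: "{0, e, 1, 1 + e} = (UNIV :: 'a set)"
      using card_seteq[OF four(1), of "{0, e, 1, 1 + e}"] four(2) by simp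
    have all: "\<And>x::'a. x = 0 \<or> x = e \<or> x = 1 \<or> x = 1 + e" using S by blast
    have Ne: "\<forall>a\<in>nonunits. a \<noteq> 0 \<longrightarrow> a = e" using all oneN 1 by metis
    have ue: "\<forall>u. u \<notin> nonunits \<longrightarrow> e * u = e"
      using all e zeroN sq[OF e(1) e(1)] by (metis add_0_right mult_1_right distrib_left)
    have ee: "e + e = 0" using Ne addN e by (metis add_cancel_right_right)
    have "3 \<notin> lengths (?X ^ 6)"
    proof
      assume "3 \<in> lengths (?X ^ 6)"
      then obtain fs where fs: "length fs = 3" "\<forall>g\<in>set fs. irreducible g" "prod_list fs = ?X ^ 6"
        unfolding lengths_def by blast
      then obtain f g h where "fs = [f, g, h]" "ml f 2" "ml g 2" "ml h 2"
        "coeff f 0 \<noteq> 0" "coeff g 0 \<noteq> 0" "coeff h 0 \<noteq> 0" using sub3 by blast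
      moreover have "coeff (f * (g * h)) 4 \<noteq> 0" by (rule c4_contra[OF e Ne ue ee]) fact+
      ultimately show False using fs(3) Xd[of 6 4] by simp
    qed
    then show ?thesis using L2 L4 L6 sub by auto
  qed
  show ?thesis using A B by auto
qed

end
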